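(* Let $T$ be a finite tree and let $P=p_0p_1\dots p_k$ ($k\ge1$) be a path in $T$ such that each of $p_1,\dots,p_{k-1}$ has degree $2$ in $T$. Let $B$ be the vertex set of the component containing $p_k$ of the graph obtained from $T$ by deleting the edges of $P$. Let $T'$ be the tree obtained from $T$ by deleting all edges between $p_k$ and $\Gamma(p_k)\setminus\{p_{k-1}\}$ and adding the edges between $p_0$ and $\Gamma(p_k)\setminus\{p_{k-1}\}$ instead. If $k$ is odd, then for every $\ell\ge1$, \[\omega_{\ell}(p_0,T[B\cup P])-\omega_{\ell}(p_0,P)\leq \omega_{\ell}(p_0,T'[B\cup P])-\omega_{\ell}(p_0,P).\]
   Context: $\Gamma(v)$ is the set of neighbours of $v$ in $T$. For a graph $G$ containing the vertices of $B$ and $P$, $G[B\cup P]$ is the subgraph of $G$ induced by $B\cup\{p_0,\dots,p_k\}$. For a graph $G$, a vertex $x$ and $\ell\ge1$, $\omega_\ell(x,G)$ is the number of walks of length $\ell$ in $G$ starting at $x$. $P$ is regarded as a graph (the path). *)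

theory Defs
  imports Main
begin

definition simple_graph :: "'a set \<Rightarrow> 'a set set \<Rightarrow> bool" where
  "simple_graph V E \<longleftrightarrow> finite V \<and>
     (\<forall>e\<in>E. \<exists>u v. e = {u, v} \<and> u \<noteq> v \<and> u \<in> V \<and> v \<in> V)"

definition walk :: "'a set set \<Rightarrow> 'a list \<Rightarrow> bool" where
  "walk E xs \<longleftrightarrow> (\<forall>i. Suc i < length xs \<longrightarrow> {xs ! i, xs ! Suc i} \<in> E)"

definition reachable :: "'a set set \<Rightarrow> 'a \<Rightarrow> 'a \<Rightarrow> bool" where
  "reachable E u v \<longleftrightarrow> (\<exists>xs. xs \<noteq> [] \<and> hd xs = u \<and> last xs = v \<and> walk E xs)"

definition connected_graph :: "'a set \<Rightarrow> 'a set set \<Rightarrow> bool" where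
  "connected_graph V E \<longleftrightarrow> (\<forall>u\<in>V. \<forall>v\<in>V. reachable E u v)"

definition has_cycle :: "'a set set \<Rightarrow> bool" where
  "has_cycle E \<longleftrightarrow> (\<exists>cs. length cs \<ge> 3 \<and> distinct cs \<and> walk E cs \<and> {last cs, hd cs} \<in> E)"

definition is_tree :: "'a set \<Rightarrow> 'a set set \<Rightarrow> bool" where
  "is_tree V E \<longleftrightarrow> simple_graph V E \<and> V \<noteq> {} \<and> connected_graph V E \<and> \<not> has_cycle E"

definition nbrs :: "'a set set \<Rightarrow> 'a \<Rightarrow> 'a set" where
  "nbrs E v = {u. {u, v} \<in> E}"

definition degree :: "'a set set \<Rightarrow> 'a \<Rightarrow> nat" where
  "degree E v = card (nbrs E v)"

definition is_path :: "'a set \<Rightarrow> 'a set set \<Rightarrow> 'a list \<Rightarrow> bool" where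
  "is_path V E ps \<longleftrightarrow> ps \<noteq> [] \<and> distinct ps \<and> set ps \<subseteq> V \<and> walk E ps"

definition path_edges :: "'a list \<Rightarrow> 'a set set" where
  "path_edges ps = {{ps ! i, ps ! Suc i} | i. Suc i < length ps}"

definition component :: "'a set \<Rightarrow> 'a set set \<Rightarrow> 'a \<Rightarrow> 'a set" where
  "component V E v = {u \<in> V. reachable E v u}"

definition induced :: "'a set set \<Rightarrow> 'a set \<Rightarrow> 'a set set" where
  "induced E S = {e \<in> E. e \<subseteq> S}"

text \<open>Number of walks of length l (l edges) starting at x.\<close>
definition num_walks :: "nat \<Rightarrow> 'a \<Rightarrow> 'a set set \<Rightarrow> nat" where
  "num_walks l x E = card {xs. length xs = Suc l \<and> hd xs = x \<and> walk E xs}"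

text \<open>T': move the edges from p_k to Gamma(p_k) - {p_(k-1)} over to p_0.\<close>
definition moved_edges :: "'a set set \<Rightarrow> 'a \<Rightarrow> 'a \<Rightarrow> 'a \<Rightarrow> 'a set set" where
  "moved_edges E p0 pk1 pk =
     (E - {{pk, u} | u. u \<in> nbrs E pk - {pk1}}) \<union> {{p0, u} | u. u \<in> nbrs E pk - {pk1}}"

end

theory Submission
  imports Defs
begin


lemma walk_Nil[simp]: "walk F []" by (simp add: walk_def)
lemma walk_single[simp]: "walk F [x]" by (simp add: walk_def)
lemma walk_Cons2[simp]: "walk F (x # y # xs) \<longleftrightarrow> {x,y} \<in> F \<and> walk F (y # xs)"
proof
  assume h: "walk F (x # y # xs)"
  have "{x,y} \<in> F" using h[unfolded walk_def, rule_format, of 0] by simp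
  moreover have "walk F (y # xs)" unfolding walk_def
  proof (intro allI impI)
    fix i assume "Suc i < length (y # xs)"
    then show "{(y # xs) ! i, (y # xs) ! Suc i} \<in> F"
      using h[unfolded walk_def, rule_format, of "Suc i"] by simp
  qed
  ultimately show "{x,y} \<in> F \<and> walk F (y # xs)" by simp
next
  assume h: "{x,y} \<in> F \<and> walk F (y # xs)"
  show "walk F (x # y # xs)" unfolding walk_def
  proof (intro allI impI)
    fix i assume i: "Suc i < length (x # y # xs)"
    show "{(x # y # xs) ! i, (x # y # xs) ! Suc i} \<in> F"
    proof (cases i)
      case 0 then show ?thesis using h by simp
    next
      case (Suc j) then show ?thesis using h i unfolding walk_def by auto
    qed
  qed
qed

lemma walk_Cons: "walk F (x # xs) \<longleftrightarrow> (xs = [] \<or> ({x, hd xs} \<in> F \<and> walk F xs))"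
  by (cases xs) auto

lemma walk_append: "walk F (xs @ ys) \<longleftrightarrow> walk F xs \<and> walk F ys \<and>
   (xs \<noteq> [] \<and> ys \<noteq> [] \<longrightarrow> {last xs, hd ys} \<in> F)"
proof (induction xs)
  case Nil then show ?case by simp
next
  case (Cons x xs)
  then show ?case by (cases xs) (auto simp: walk_Cons)
qed

lemma walk_rev: "walk F xs \<Longrightarrow> walk F (rev xs)"
proof (induction xs)
  case Nil then show ?case by simp
next
  case (Cons x xs)
  then show ?case by (cases xs) (auto simp: walk_append walk_Cons insert_commute last_rev hd_rev)
qed

lemma walk_mono: "walk F xs \<Longrightarrow> F \<subseteq> F' \<Longrightarrow> walk F' xs"
  unfolding walk_def by blast

lemma reachable_refl: "reachable F u u"
  unfolding reachable_def by (rule exI[of _ "[u]"]) simp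

lemma reachable_sym: "reachable F u v \<Longrightarrow> reachable F v u"
  unfolding reachable_def
  by (metis walk_rev Nil_is_rev_conv hd_rev last_rev)

lemma reachable_trans: assumes "reachable F u v" "reachable F v w" shows "reachable F u w"
proof -
  obtain xs where xs: "xs \<noteq> []" "hd xs = u" "last xs = v" "walk F xs" using assms(1) reachable_def by metis
  obtain ys where ys: "ys \<noteq> []" "hd ys = v" "last ys = w" "walk F ys" using assms(2) reachable_def by metis
  obtain y ys' where yy: "ys = y # ys'" using ys(1) by (cases ys) auto
  have "walk F (xs @ ys')"
    using xs ys yy by (cases ys') (auto simp: walk_append walk_Cons)
  moreover have "last (xs @ ys') = w" using xs ys yy by (cases ys') auto
  ultimately show ?thesis unfolding reachable_def using xs
    by (metis append_is_Nil_conv hd_append2)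
qed

lemma reachable_edge: "{u,v} \<in> F \<Longrightarrow> reachable F u v"
  unfolding reachable_def by (rule exI[of _ "[u,v]"]) simp

lemma reachable_mono: "reachable F u v \<Longrightarrow> F \<subseteq> F' \<Longrightarrow> reachable F' u v"
  unfolding reachable_def using walk_mono by metis

lemma reachable_first: assumes "reachable F u w" "u \<noteq> w" shows "\<exists>v. {u,v} \<in> F"
proof -
  obtain xs where xs: "xs \<noteq> []" "hd xs = u" "last xs = w" "walk F xs" using assms(1) reachable_def by metis
  then obtain ys where "xs = u # ys" by (cases xs) auto
  with xs assms(2) show ?thesis by (cases ys) auto
qed

lemma reachable_last: assumes "reachable F u w" "u \<noteq> w" shows "\<exists>v. {v,w} \<in> F"
  using reachable_first[OF reachable_sym[OF assms(1)]] assms(2) by (metis insert_commute)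

lemma distinct_walk:
  "xs \<noteq> [] \<Longrightarrow> walk F xs \<Longrightarrow> \<exists>ys. ys \<noteq> [] \<and> distinct ys \<and> hd ys = hd xs \<and> last ys = last xs \<and> walk F ys"
proof (induction "length xs" arbitrary: xs rule: less_induct)
  case less
  show ?case
  proof (cases "distinct xs")
    case True then show ?thesis using less.prems by blast
  next
    case False
    then obtain as y bs cs where d: "xs = as @ [y] @ bs @ [y] @ cs" using not_distinct_decomp by blast
    let ?zs = "as @ [y] @ cs"
    have h2: "walk F ((as @ y # bs) @ (y # cs))" using less.prems(2) unfolding d by simp
    then have h3: "walk F (y # cs)" "walk F (as @ y # bs)" unfolding walk_append by blast+
    then have h4: "walk F as" "as \<noteq> [] \<longrightarrow> {last as, y} \<in> F" unfolding walk_append by auto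
    have w: "walk F ?zs" using h3 h4 by (simp add: walk_append)
    have "length ?zs < length xs" using d by simp
    moreover have "hd ?zs = hd xs" "last ?zs = last xs" using d by (cases as; cases cs; simp)+
    ultimately show ?thesis using less.hyps[of ?zs] w by fastforce
  qed
qed

lemma cycle_from_reach:
  assumes "{a,b} \<in> E" "a \<noteq> b" "reachable (E - {{a,b}}) a b"
  shows "has_cycle E"
proof -
  obtain xs where xs: "xs \<noteq> []" "hd xs = a" "last xs = b" "walk (E - {{a,b}}) xs"
    using assms(3) reachable_def by metis
  obtain cs where cs: "cs \<noteq> []" "distinct cs" "hd cs = a" "last cs = b" "walk (E - {{a,b}}) cs"
    using distinct_walk[OF xs(1,4)] xs by metis
  have "length cs \<ge> 3"
  proof (rule ccontr)
    assume "\<not> 3 \<le> length cs"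
    then have "length cs \<le> 2" by simp
    then consider "cs = [a]" | x y where "cs = [x,y]" using cs(1,3)
      by (cases cs; cases "tl cs"; auto)
    then show False
    proof cases
      case 1 then show False using cs assms(2) by simp
    next
      case 2 then show False using cs by simp
    qed
  qed
  moreover have "walk E cs" using cs(5) walk_mono by blast
  moreover have "{last cs, hd cs} \<in> E" using cs assms(1) by (simp add: insert_commute)
  ultimately show ?thesis unfolding has_cycle_def using cs(2) by blast
qed




definition wset :: "nat \<Rightarrow> 'a \<Rightarrow> 'a set set \<Rightarrow> 'a list set" where
  "wset l x F = {xs. length xs = Suc l \<and> hd xs = x \<and> walk F xs}"

lemma num_walks_wset: "num_walks l x F = card (wset l x F)"
  unfolding num_walks_def wset_def by simp

lemma walk_set: "walk F xs \<Longrightarrow> xs \<noteq> [] \<Longrightarrow> set xs \<subseteq> insert (hd xs) (\<Union>F)"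
proof (induction xs)
  case Nil then show ?case by simp
next
  case (Cons x xs)
  then show ?case by (cases xs) (auto simp: walk_Cons)
qed

lemma finite_wset: assumes "finite (\<Union>F)" shows "finite (wset l x F)"
proof -
  have "wset l x F \<subseteq> {xs. set xs \<subseteq> insert x (\<Union>F) \<and> length xs = Suc l}"
    unfolding wset_def using walk_set by fastforce
  moreover have "finite {xs. set xs \<subseteq> insert x (\<Union>F) \<and> length xs = Suc l}"
    using finite_lists_length_eq assms by blast
  ultimately show ?thesis by (rule finite_subset)
qed

lemma walks_mono_len:
  assumes fin: "finite (\<Union>F)" and nb: "{x,y} \<in> F"
  shows "num_walks l x F \<le> num_walks (Suc l) x F"
proof -
  define nx where "nx v = (SOME w. {v,w} \<in> F)" for v
  have ex: "\<exists>w. {last xs, w} \<in> F" if "xs \<in> wset l x F" for xs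
  proof -
    have "xs \<noteq> []" "hd xs = x" using that unfolding wset_def by auto
    then obtain ys where ys: "xs = x # ys" by (metis list.collapse)
    show ?thesis
    proof (cases "ys = []")
      case True then show ?thesis using ys nb by auto
    next
      case False
      then obtain zs z where "ys = zs @ [z]" by (metis rev_exhaust)
      then have "walk F ((x # zs) @ [z])" "last xs = z" using that ys unfolding wset_def by auto
      then have "{last (x # zs), z} \<in> F" "last xs = z" unfolding walk_append by auto
      then show ?thesis by (metis insert_commute)
    qed
  qed
  have "card (wset l x F) \<le> card (wset (Suc l) x F)"
  proof (rule card_inj_on_le[where f = "\<lambda>xs. xs @ [nx (last xs)]"])
    show "inj_on (\<lambda>xs. xs @ [nx (last xs)]) (wset l x F)"
      by (rule inj_onI) simp
    show "(\<lambda>xs. xs @ [nx (last xs)]) ` wset l x F \<subseteq> wset (Suc l) x F"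
    proof
      fix ys assume "ys \<in> (\<lambda>xs. xs @ [nx (last xs)]) ` wset l x F"
      then obtain xs where xs: "xs \<in> wset l x F" "ys = xs @ [nx (last xs)]" by blast
      have "{last xs, nx (last xs)} \<in> F" using ex[OF xs(1)] unfolding nx_def by (rule someI_ex)
      moreover have "walk F xs" "xs \<noteq> []" "length xs = Suc l" "hd xs = x" using xs(1) unfolding wset_def by auto
      ultimately show "ys \<in> wset (Suc l) x F" using xs(2) unfolding wset_def
        by (simp add: walk_append)
    qed
    show "finite (wset (Suc l) x F)" using finite_wset[OF fin] .
  qed
  then show ?thesis by (simp add: num_walks_wset)
qed





lemma walks_first:
  assumes fin: "finite (\<Union>F)" and nb: "\<And>v. {x,v} \<in> F \<Longrightarrow> v = y"
  shows "num_walks (Suc l) x F \<le> num_walks l y F"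
proof -
  have "card (wset (Suc l) x F) \<le> card (wset l y F)"
  proof (rule card_inj_on_le[where f = tl])
    show "inj_on tl (wset (Suc l) x F)"
    proof (rule inj_onI)
      fix a b assume "a \<in> wset (Suc l) x F" "b \<in> wset (Suc l) x F" "tl a = tl b"
      then have "a \<noteq> []" "b \<noteq> []" "hd a = hd b" "tl a = tl b" unfolding wset_def by auto
      then show "a = b" by (metis list.collapse)
    qed
    show "tl ` wset (Suc l) x F \<subseteq> wset l y F"
    proof
      fix ys assume "ys \<in> tl ` wset (Suc l) x F"
      then obtain xs where xs: "xs \<in> wset (Suc l) x F" "ys = tl xs" by blast
      then have h: "length xs = Suc (Suc l)" "hd xs = x" "walk F xs" unfolding wset_def by auto
      obtain a zs where az: "xs = a # zs" "length zs = Suc l" using h(1) by (cases xs) auto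
      then obtain b cs where bc: "zs = b # cs" by (cases zs) auto
      have "a = x" "{a,b} \<in> F" "walk F (b # cs)" using h az bc by auto
      then have "b = y" using nb by simp
      then show "ys \<in> wset l y F" using xs(2) az bc \<open>walk F (b # cs)\<close> unfolding wset_def by simp
    qed
    show "finite (wset l y F)" using finite_wset[OF fin] .
  qed
  then show ?thesis by (simp add: num_walks_wset)
qed

lemma walk_map: "walk F xs \<Longrightarrow> (\<And>u v. {u,v} \<in> F \<Longrightarrow> {\<phi> u, \<phi> v} \<in> F') \<Longrightarrow> walk F' (map \<phi> xs)"
proof (induction xs)
  case Nil then show ?case by simp
next
  case (Cons x xs) then show ?case by (cases xs) (simp_all add: walk_Cons)
qed

lemma walks_hom:
  assumes fin: "finite (\<Union>F')" and inj: "inj \<phi>" and hom: "\<And>u v. {u,v} \<in> F \<Longrightarrow> {\<phi> u, \<phi> v} \<in> F'"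
  shows "num_walks l x F \<le> num_walks l (\<phi> x) F'"
proof -
  have "card (wset l x F) \<le> card (wset l (\<phi> x) F')"
  proof (rule card_inj_on_le[where f = "map \<phi>"])
    show "inj_on (map \<phi>) (wset l x F)" using inj inj_mapI by (metis inj_on_subset subset_UNIV)
    show "map \<phi> ` wset l x F \<subseteq> wset l (\<phi> x) F'"
    proof
      fix ys assume "ys \<in> map \<phi> ` wset l x F"
      then obtain xs where xs: "xs \<in> wset l x F" "ys = map \<phi> xs" by blast
      then have h: "length xs = Suc l" "hd xs = x" "walk F xs" unfolding wset_def by auto
      then have "xs \<noteq> []" by auto
      then have "hd ys = \<phi> x" using h xs(2) by (simp add: hd_map)
      moreover have "walk F' ys" using walk_map[of F xs \<phi> F', OF h(3) hom] xs(2) by blast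
      ultimately show "ys \<in> wset l (\<phi> x) F'" using h xs(2) unfolding wset_def by simp
    qed
    show "finite (wset l (\<phi> x) F')" using finite_wset[OF fin] .
  qed
  then show ?thesis by (simp add: num_walks_wset)
qed



definition refl_walk :: "('a \<Rightarrow> 'a) \<Rightarrow> 'a \<Rightarrow> 'a list \<Rightarrow> 'a list" where
  "refl_walk \<sigma> z xs = map \<sigma> (takeWhile (\<lambda>v. v \<noteq> z) xs) @ dropWhile (\<lambda>v. v \<noteq> z) xs"

lemma refl_walk_walk:
  assumes L: "\<And>u v. u \<in> L \<Longrightarrow> {u,v} \<in> F \<Longrightarrow> (v \<in> L \<or> v = z) \<and> {\<sigma> u, \<sigma> v} \<in> F"
    and zL: "z \<notin> L" and sz: "\<sigma> z = z"
  shows "xs \<noteq> [] \<Longrightarrow> hd xs \<in> L \<Longrightarrow> walk F xs \<Longrightarrow> walk F (refl_walk \<sigma> z xs) \<and> hd (refl_walk \<sigma> z xs) = \<sigma> (hd xs)"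
proof (induction xs)
  case Nil then show ?case by simp
next
  case (Cons x xs)
  have xz: "x \<noteq> z" using Cons.prems zL by auto
  show ?case
  proof (cases xs)
    case Nil then show ?thesis using xz by (simp add: refl_walk_def)
  next
    case (Cons y ys)
    have e: "{x,y} \<in> F" "walk F (y # ys)" using Cons.prems \<open>xs = y # ys\<close> by auto
    have xL: "x \<in> L" using Cons.prems by simp
    show ?thesis
    proof (cases "y = z")
      case True
      then show ?thesis using xz e L[OF xL e(1)] sz \<open>xs = y # ys\<close> by (simp add: refl_walk_def)
    next
      case False
      then have yL: "y \<in> L" using L[OF xL e(1)] by simp
      have ih: "walk F (refl_walk \<sigma> z xs) \<and> hd (refl_walk \<sigma> z xs) = \<sigma> y"
        using Cons.IH \<open>xs = y # ys\<close> yL e(2) by simp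
      have "refl_walk \<sigma> z (x # xs) = \<sigma> x # refl_walk \<sigma> z xs" using xz by (simp add: refl_walk_def)
      moreover have "refl_walk \<sigma> z xs \<noteq> []" using False \<open>xs = y # ys\<close> by (simp add: refl_walk_def)
      ultimately show ?thesis using ih L[OF xL e(1)] by (simp add: walk_Cons)
    qed
  qed
qed




lemma refl_walk_inj:
  assumes inj: "inj \<sigma>" and sz: "\<sigma> z = z"
  shows "inj (refl_walk \<sigma> z)"
proof (rule injI)
  fix xs ys assume h: "refl_walk \<sigma> z xs = refl_walk \<sigma> z ys"
  have nz: "\<forall>v\<in>set (map \<sigma> (takeWhile (\<lambda>v. v \<noteq> z) as)). v \<noteq> z" for as
  proof
    fix v assume "v \<in> set (map \<sigma> (takeWhile (\<lambda>v. v \<noteq> z) as))"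
    then obtain u where u: "u \<in> set (takeWhile (\<lambda>v. v \<noteq> z) as)" "v = \<sigma> u" by auto
    then have "u \<noteq> z" by (blast dest: set_takeWhileD)
    then have "\<sigma> u \<noteq> \<sigma> z" using inj by (simp add: inj_eq)
    then show "v \<noteq> z" using u sz by simp
  qed
  have tw: "takeWhile (\<lambda>v. v \<noteq> z) (refl_walk \<sigma> z as) = map \<sigma> (takeWhile (\<lambda>v. v \<noteq> z) as)" for as
  proof -
    have "takeWhile (\<lambda>v. v \<noteq> z) (dropWhile (\<lambda>v. v \<noteq> z) as) = []"
      by (induction as) auto
    moreover have "takeWhile (\<lambda>v. v \<noteq> z) (map \<sigma> (takeWhile (\<lambda>v. v \<noteq> z) as) @ dropWhile (\<lambda>v. v \<noteq> z) as)
       = map \<sigma> (takeWhile (\<lambda>v. v \<noteq> z) as) @ takeWhile (\<lambda>v. v \<noteq> z) (dropWhile (\<lambda>v. v \<noteq> z) as)"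
      by (rule takeWhile_append2) (use nz[of as] in blast)
    ultimately show ?thesis unfolding refl_walk_def by simp
  qed
  have dw: "dropWhile (\<lambda>v. v \<noteq> z) (refl_walk \<sigma> z as) = dropWhile (\<lambda>v. v \<noteq> z) as" for as
  proof -
    have "dropWhile (\<lambda>v. v \<noteq> z) (dropWhile (\<lambda>v. v \<noteq> z) as) = dropWhile (\<lambda>v. v \<noteq> z) as"
      by (induction as) auto
    moreover have "dropWhile (\<lambda>v. v \<noteq> z) (map \<sigma> (takeWhile (\<lambda>v. v \<noteq> z) as) @ dropWhile (\<lambda>v. v \<noteq> z) as)
       = dropWhile (\<lambda>v. v \<noteq> z) (dropWhile (\<lambda>v. v \<noteq> z) as)"
      by (rule dropWhile_append2) (use nz[of as] in blast)
    ultimately show ?thesis unfolding refl_walk_def by simp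
  qed
  have "map \<sigma> (takeWhile (\<lambda>v. v \<noteq> z) xs) = map \<sigma> (takeWhile (\<lambda>v. v \<noteq> z) ys)"
    using tw[of xs] tw[of ys] h by metis
  then have "takeWhile (\<lambda>v. v \<noteq> z) xs = takeWhile (\<lambda>v. v \<noteq> z) ys"
    using inj by (simp add: inj_map_eq_map)
  moreover have "dropWhile (\<lambda>v. v \<noteq> z) xs = dropWhile (\<lambda>v. v \<noteq> z) ys"
    using dw[of xs] dw[of ys] h by metis
  ultimately show "xs = ys"
    by (metis takeWhile_dropWhile_id)
qed




lemma walks_refl:
  assumes fin: "finite (\<Union>F)" and inj: "inj \<sigma>" and sz: "\<sigma> z = z"
    and L: "\<And>u v. u \<in> L \<Longrightarrow> {u,v} \<in> F \<Longrightarrow> (v \<in> L \<or> v = z) \<and> {\<sigma> u, \<sigma> v} \<in> F"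
    and zL: "z \<notin> L" and xL: "x \<in> L"
  shows "num_walks l x F \<le> num_walks l (\<sigma> x) F"
proof -
  have "card (wset l x F) \<le> card (wset l (\<sigma> x) F)"
  proof (rule card_inj_on_le[where f = "refl_walk \<sigma> z"])
    show "inj_on (refl_walk \<sigma> z) (wset l x F)" using refl_walk_inj[OF inj sz] by (metis inj_on_subset subset_UNIV)
    show "refl_walk \<sigma> z ` wset l x F \<subseteq> wset l (\<sigma> x) F"
    proof
      fix ys assume "ys \<in> refl_walk \<sigma> z ` wset l x F"
      then obtain xs where xs: "xs \<in> wset l x F" "ys = refl_walk \<sigma> z xs" by blast
      have ne: "xs \<noteq> []" using xs unfolding wset_def by auto
      have "length (takeWhile (\<lambda>v. v \<noteq> z) xs) + length (dropWhile (\<lambda>v. v \<noteq> z) xs) = length xs"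
        by (induction xs) auto
      then have len: "length (refl_walk \<sigma> z xs) = length xs" unfolding refl_walk_def by simp
      show "ys \<in> wset l (\<sigma> x) F" using xs ne len refl_walk_walk[OF L zL sz ne] xL unfolding wset_def by auto
    qed
    show "finite (wset l (\<sigma> x) F)" using finite_wset[OF fin] .
  qed
  then show ?thesis by (simp add: num_walks_wset)
qed




definition rf :: "'a list \<Rightarrow> 'a \<Rightarrow> 'a" where
  "rf zs v = (if v \<in> set zs then zs ! (length zs - 1 - (THE i. i < length zs \<and> zs ! i = v)) else v)"

lemma rf_nth: assumes "distinct zs" "i < length zs" shows "rf zs (zs ! i) = zs ! (length zs - 1 - i)"
proof -
  have "(THE j. j < length zs \<and> zs ! j = zs ! i) = i"
    using assms by (auto simp: nth_eq_iff_index_eq)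
  then show ?thesis using assms by (simp add: rf_def)
qed

lemma rf_out: "v \<notin> set zs \<Longrightarrow> rf zs v = v" by (simp add: rf_def)

lemma rf_invol: assumes "distinct zs" shows "rf zs (rf zs v) = v"
proof (cases "v \<in> set zs")
  case True
  then obtain i where i: "i < length zs" "v = zs ! i" by (metis in_set_conv_nth)
  have "length zs - 1 - i < length zs" using i by simp
  then have "rf zs (rf zs v) = zs ! (length zs - 1 - (length zs - 1 - i))"
    using rf_nth[OF assms] i by simp
  also have "\<dots> = v" using i by (simp add: Suc_diff_Suc)
  finally show ?thesis .
next
  case False then show ?thesis by (simp add: rf_out)
qed

lemma rf_inj: "distinct zs \<Longrightarrow> inj (rf zs)"
  by (metis injI rf_invol)

lemma doubleton_facts: assumes "{u,v} = {a,b}" "a \<noteq> b" "a \<in> V" "b \<in> V" shows "u \<noteq> v \<and> u \<in> V \<and> v \<in> V"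
proof -
  have "u \<in> {a,b}" "v \<in> {a,b}" using assms(1) by (metis insertI1, metis insertI1 insert_commute)
  moreover have "u \<noteq> v"
  proof
    assume "u = v" then have "{a,b} = {u}" using assms(1) by simp
    then have "a \<in> {u}" "b \<in> {u}" by (metis insertI1, metis insertI1 insert_commute)
    then show False using assms(2) by simp
  qed
  ultimately show ?thesis using assms by blast
qed



theorem corollary4:
  fixes V :: "'a set" and E :: "'a set set" and ps :: "'a list" and k l :: nat
  assumes "is_tree V E"
    and "is_path V E ps" and "length ps = Suc k" and "k \<ge> 1"
    and "\<And>i. 1 \<le> i \<Longrightarrow> i \<le> k - 1 \<Longrightarrow> degree E (ps ! i) = 2"
    and "odd k" and "l \<ge> 1"
  shows "let B = component V (E - path_edges ps) (ps ! k);
             E' = moved_edges E (ps ! 0) (ps ! (k - 1)) (ps ! k);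
             S = B \<union> set ps
         in int (num_walks l (ps ! 0) (induced E S)) - int (num_walks l (ps ! 0) (path_edges ps))
            \<le> int (num_walks l (ps ! 0) (induced E' S)) - int (num_walks l (ps ! 0) (path_edges ps))"
proof -
  note tree = assms(1) and path = assms(2) and len = assms(3) and k1 = assms(4)
    and deg = assms(5) and oddk = assms(6) and l1 = assms(7)
  define p where "p i = ps ! i" for i
  define PE where "PE = path_edges ps"
  define B where "B = component V (E - PE) (p k)"
  define N where "N = nbrs E (p k) - {p (k - 1)}"
  define E' where "E' = moved_edges E (p 0) (p (k - 1)) (p k)"
  define S where "S = B \<union> set ps"
  define G1 where "G1 = induced E S"
  define G2 where "G2 = induced E' S"
  have sg: "simple_graph V E" and nocyc: "\<not> has_cycle E" using tree unfolding is_tree_def by simp_all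
  have finV: "finite V" using sg unfolding simple_graph_def by simp
  have eform: "\<exists>u v. e = {u,v} \<and> u \<noteq> v \<and> u \<in> V \<and> v \<in> V" if "e \<in> E" for e
    using sg that unfolding simple_graph_def by simp
  have edge2: "u \<noteq> v \<and> u \<in> V \<and> v \<in> V" if "{u,v} \<in> E" for u v
  proof -
    from eform[OF that] obtain a b where "{u,v} = {a,b}" "a \<noteq> b" "a \<in> V" "b \<in> V" by blast
    then show ?thesis by (rule doubleton_facts)
  qed
  have dist: "distinct ps" and psV: "set ps \<subseteq> V" and wk: "walk E ps"
    using path unfolding is_path_def by auto
  have pinj: "p i = p j \<longleftrightarrow> i = j" if "i \<le> k" "j \<le> k" for i j
    using dist that len unfolding p_def by (simp add: nth_eq_iff_index_eq)
  have pset: "p i \<in> set ps" if "i \<le> k" for i using that len nth_mem[of i ps] unfolding p_def by simp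
  have setp: "\<exists>i\<le>k. v = p i" if vin: "v \<in> set ps" for v
  proof -
    obtain i where i: "i < length ps" "ps ! i = v" using vin[unfolded in_set_conv_nth] by blast
    have "i \<le> k" using i(1) len by simp
    moreover have "v = p i" using i(2) unfolding p_def by simp
    ultimately show ?thesis by blast
  qed
  have pV: "p i \<in> V" if "i \<le> k" for i using pset[OF that] psV by blast
  have pe: "{p i, p (Suc i)} \<in> E" if "i < k" for i
    using wk that len unfolding walk_def p_def by simp
  have peP: "{p i, p (Suc i)} \<in> PE" if "i < k" for i
    using that len unfolding PE_def path_edges_def p_def by auto
  have PE_E: "e \<in> E \<and> e \<subseteq> set ps" if eP: "e \<in> PE" for e
  proof -
    obtain i where "e = {p i, p (Suc i)}" "i < k" using eP len unfolding PE_def path_edges_def p_def by auto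
    then show ?thesis using pe pset by auto
  qed
  have pe_char: "(i < k \<and> v = p (Suc i)) \<or> (0 < i \<and> v = p (i - 1))" if h: "{p i, v} \<in> PE" "i \<le> k" for i v
  proof -
    obtain j where j: "{p i, v} = {p j, p (Suc j)}" "j < k" using h len unfolding PE_def path_edges_def p_def by auto
    then consider "p i = p j" "v = p (Suc j)" | "p i = p (Suc j)" "v = p j" unfolding doubleton_eq_iff by blast
    then show ?thesis
    proof cases
      case 1 then have "i = j" using pinj that(2) j(2) by simp
      then show ?thesis using 1 j by simp
    next
      case 2 then have "i = Suc j" using pinj that(2) j(2) by simp
      then show ?thesis using 2 j by simp
    qed
  qed
  have nb_int: "v = p (i - 1) \<or> v = p (Suc i)" if "0 < i" "i < k" "{p i, v} \<in> E" for i v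
  proof -
    have d: "card (nbrs E (p i)) = 2" using deg[of i] that unfolding degree_def p_def by simp
    have sub: "{p (i - 1), p (Suc i)} \<subseteq> nbrs E (p i)"
    proof -
      have "{p (i - 1), p (Suc (i - 1))} \<in> E" using pe[of "i - 1"] that by simp
      then have "{p (i - 1), p i} \<in> E" using that by simp
      moreover have "{p (Suc i), p i} \<in> E" using pe[of i] that by (simp add: insert_commute)
      ultimately show ?thesis unfolding nbrs_def by simp
    qed
    have ne: "p (i - 1) \<noteq> p (Suc i)" using pinj that by simp
    have fin: "finite (nbrs E (p i))"
      using finV edge2 unfolding nbrs_def by (metis (no_types, lifting) mem_Collect_eq rev_finite_subset subsetI)
    have "card {p (i - 1), p (Suc i)} = 2" using ne by simp
    then have "{p (i - 1), p (Suc i)} = nbrs E (p i)" using card_subset_eq[OF fin sub] d by simp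
    moreover have "v \<in> nbrs E (p i)" using that(3) unfolding nbrs_def by (simp add: insert_commute)
    ultimately show ?thesis by blast
  qed
  have int_PE: "{p i, v} \<in> PE" if h: "0 < i" "i < k" "{p i, v} \<in> E" for i v
  proof -
    consider "v = p (i - 1)" | "v = p (Suc i)" using nb_int[OF h] by blast
    then show ?thesis
    proof cases
      case 1
      have "{p (i - 1), p (Suc (i - 1))} \<in> PE" using peP[of "i - 1"] that by simp
      then show ?thesis using 1 that by (simp add: insert_commute)
    next
      case 2 then show ?thesis using peP[of i] that by simp
    qed
  qed
  have pkB: "p k \<in> B" unfolding B_def component_def using pV[of k] reachable_refl by simp
  have BV: "B \<subseteq> V" unfolding B_def component_def by auto
  have B_closed: "v \<in> B" if "u \<in> B" "{u,v} \<in> E" "{u,v} \<notin> PE" for u v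
  proof -
    have "reachable (E - PE) (p k) u" using that(1) unfolding B_def component_def by simp
    moreover have "reachable (E - PE) u v" using that by (simp add: reachable_edge)
    ultimately have "reachable (E - PE) (p k) v" by (rule reachable_trans)
    then show ?thesis using edge2[OF that(2)] unfolding B_def component_def by simp
  qed
  have p0B: "p 0 \<notin> B"
  proof
    assume "p 0 \<in> B"
    then have r0: "reachable (E - PE) (p k) (p 0)" unfolding B_def component_def by simp
    define e0 where "e0 = {p (k - 1), p k}"
    have e0PE: "e0 \<in> PE" using peP[of "k - 1"] k1 unfolding e0_def by simp
    have "j \<le> k - 1 \<longrightarrow> reachable (E - {e0}) (p j) (p 0)" for j
    proof (induction j)
      case 0 then show ?case by (simp add: reachable_refl)
    next
      case (Suc j)
      show ?case
      proof
        assume sj: "Suc j \<le> k - 1"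
        have "{p (Suc j), p j} \<in> E" using pe[of j] sj by (simp add: insert_commute)
        moreover have "{p (Suc j), p j} \<noteq> e0"
        proof
          assume "{p (Suc j), p j} = e0"
          then have "p j \<in> {p (k - 1), p k}" unfolding e0_def by blast
          then show False using pinj[of j "k - 1"] pinj[of j k] sj by auto
        qed
        ultimately have "reachable (E - {e0}) (p (Suc j)) (p j)" by (simp add: reachable_edge)
        moreover have "reachable (E - {e0}) (p j) (p 0)" using Suc.IH sj by simp
        ultimately show "reachable (E - {e0}) (p (Suc j)) (p 0)" by (rule reachable_trans)
      qed
    qed
    then have r1: "reachable (E - {e0}) (p (k - 1)) (p 0)" by simp
    have sub: "E - PE \<subseteq> E - {e0}" using e0PE by blast
    have "reachable (E - {e0}) (p k) (p 0)" using reachable_mono[OF r0 sub] .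
    then have r2: "reachable (E - {e0}) (p (k - 1)) (p k)" using reachable_trans[OF r1 reachable_sym] by blast
    have "{p (k - 1), p k} \<in> E" using pe[of "k - 1"] k1 by simp
    moreover have "p (k - 1) \<noteq> p k" using pinj k1 by simp
    ultimately have "has_cycle E" using cycle_from_reach[of "p (k - 1)" "p k" E] r2 unfolding e0_def by blast
    then show False using nocyc by simp
  qed
  have pB: "p i \<notin> B" if "i < k" for i
  proof (cases "i = 0")
    case True then show ?thesis using p0B by simp
  next
    case False
    show ?thesis
    proof
      assume "p i \<in> B"
      then have r: "reachable (E - PE) (p k) (p i)" unfolding B_def component_def by simp
      have "p k \<noteq> p i" using pinj that by simp
      then obtain x where "{x, p i} \<in> E - PE" using reachable_last[OF r] by blast
      then have "{p i, x} \<in> E" "{p i, x} \<notin> PE" by (auto simp: insert_commute)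
      then show False using int_PE[of i x] False that by simp
    qed
  qed
  have Bps: "v = p k" if "v \<in> B" "v \<in> set ps" for v
  proof -
    have "v \<in> set ps" using that by simp
    then obtain i where "i \<le> k" "v = p i" using setp by blast
    then show ?thesis using pB[of i] that(1) by (cases "i = k") auto
  qed
  have cls: "\<exists>u v. e = {u,v} \<and> u \<in> B \<and> v \<in> B \<and> u \<noteq> v" if "e \<in> E" "e \<subseteq> S" "e \<notin> PE" for e
  proof -
    from eform[OF that(1)] obtain u v where uv: "e = {u,v}" "u \<noteq> v" "u \<in> V" "v \<in> V" by blast
    have uvS: "u \<in> S" "v \<in> S" using that(2) uv by auto
    have c1: "u \<in> B \<longrightarrow> v \<in> B" using B_closed[of u v] that uv by simp
    have c2: "v \<in> B \<longrightarrow> u \<in> B" using B_closed[of v u] that uv by (simp add: insert_commute)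
    have c3: "w = p 0" if "w \<in> {u,v}" "w \<notin> B" for w
    proof -
      have "w \<in> set ps" using that uvS unfolding S_def by auto
      then obtain i where i: "i \<le> k" "w = p i" using setp by blast
      have "i \<noteq> k" using i that pkB by auto
      moreover have "\<not> (0 < i \<and> i < k)"
      proof
        assume ii: "0 < i \<and> i < k"
        have "{p i, if w = u then v else u} \<in> E" using that(1) uv that(1) i \<open>e \<in> E\<close>
          by (auto simp: insert_commute)
        then have "{p i, if w = u then v else u} \<in> PE" using int_PE ii by blast
        then show False using that(1) uv i \<open>e \<notin> PE\<close> by (auto simp: insert_commute split: if_splits)
      qed
      ultimately show ?thesis using i by simp
    qed
    show ?thesis
    proof (cases "u \<in> B \<or> v \<in> B")
      case True then show ?thesis using c1 c2 uv by blast
    next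
      case False then have "u = p 0" "v = p 0" using c3 by auto
      then show ?thesis using uv by simp
    qed
  qed
  have Nprop: "u \<in> B \<and> u \<notin> set ps \<and> {p k, u} \<in> E \<and> u \<noteq> p k" if "u \<in> N" for u
  proof -
    have e: "{p k, u} \<in> E" "u \<noteq> p (k - 1)" using that unfolding N_def nbrs_def by (auto simp: insert_commute)
    have "{p k, u} \<notin> PE" using pe_char[of k u] e by auto
    then have uB: "u \<in> B" using B_closed pkB e by blast
    have "u \<noteq> p k" using edge2[OF e(1)] by metis
    then have "u \<notin> set ps" using Bps uB by blast
    then show ?thesis using uB e \<open>u \<noteq> p k\<close> by simp
  qed
  have G1_def': "e \<in> G1 \<longleftrightarrow> e \<in> E \<and> e \<subseteq> S" for e unfolding G1_def induced_def by simp
  have G2_def': "e \<in> G2 \<longleftrightarrow> e \<in> E' \<and> e \<subseteq> S" for e unfolding G2_def induced_def by simp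
  have E'_eq: "E' = (E - {{p k, u} | u. u \<in> N}) \<union> {{p 0, u} | u. u \<in> N}"
    unfolding E'_def moved_edges_def N_def by simp
  have psS: "set ps \<subseteq> S" and BS: "B \<subseteq> S" unfolding S_def by auto
  have finS: "finite S" unfolding S_def using BV finV finite_subset by blast
  have fin1: "finite (\<Union>G1)"
  proof (rule finite_subset[OF _ finS])
    show "\<Union>G1 \<subseteq> S" using G1_def' by blast
  qed
  have fin2: "finite (\<Union>G2)"
  proof (rule finite_subset[OF _ finS])
    show "\<Union>G2 \<subseteq> S" using G2_def' by blast
  qed
  have pG1: "{p j, p (Suc j)} \<in> G1" if "j < k" for j
    using pe[OF that] pset[of j] pset[of "Suc j"] that psS G1_def' by auto
  have pG2: "{p j, p (Suc j)} \<in> G2" if "j < k" for j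
  proof -
    have "{p j, p (Suc j)} \<notin> {{p k, u} | u. u \<in> N}"
    proof
      assume "{p j, p (Suc j)} \<in> {{p k, u} | u. u \<in> N}"
      then obtain w where w: "{p j, p (Suc j)} = {p k, w}" "w \<in> N" by blast
      then have "w \<in> {p j, p (Suc j)}" by blast
      then have "w \<in> set ps" using pset[of j] pset[of "Suc j"] that by auto
      then show False using Nprop[OF w(2)] by simp
    qed
    then have "{p j, p (Suc j)} \<in> E'" using E'_eq pe[OF that] by simp
    then show ?thesis using pset[of j] pset[of "Suc j"] that psS G2_def' by auto
  qed
  have nb0: "v = p 1" if "{p 0, v} \<in> G1" for v
  proof (cases "{p 0, v} \<in> PE")
    case True then show ?thesis using pe_char[of 0 v] by simp
  next
    case False
    have h: "{p 0, v} \<in> E" "{p 0, v} \<subseteq> S" using that G1_def' by auto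
    from cls[OF h False] obtain a b where ab: "{p 0, v} = {a,b}" "a \<in> B" "b \<in> B" by blast
    have "p 0 \<in> {p 0, v}" by simp
    then have "p 0 \<in> {a, b}" by (simp only: ab(1))
    then have "p 0 \<in> B" using ab(2,3) by auto
    then show ?thesis using p0B by simp
  qed
  have bkG1: "{p k, b} \<in> G1" if "b \<in> N" for b
    using Nprop[OF that] pset[of k] psS BS G1_def' by auto
  define \<phi> where "\<phi> = rf ps"
  have rfp: "\<phi> (p i) = p (k - i)" if "i \<le> k" for i
    using rf_nth[OF dist, of i] that len unfolding \<phi>_def p_def by simp
  have rfo: "\<phi> v = v" if "v \<notin> set ps" for v using rf_out[OF that] unfolding \<phi>_def by simp
  have aux: "\<phi> ` {a,b} \<in> G2" if "a \<in> B" "b \<in> B" "a \<noteq> b" "{a,b} \<in> E" "a = p k" for a b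
  proof -
    have "b \<noteq> p k" using that by simp
    have "b \<noteq> p (k - 1)" using pB[of "k - 1"] k1 that(2) by auto
    moreover have "{b, p k} \<in> E" using that by (simp add: insert_commute)
    ultimately have bN: "b \<in> N" unfolding N_def nbrs_def by simp
    have "b \<notin> set ps" using Nprop[OF bN] by simp
    then have "\<phi> ` {a,b} = {p 0, b}" using rfp[of k] that(5) rfo by simp
    moreover have "{p 0, b} \<in> E'" using E'_eq bN by blast
    moreover have "{p 0, b} \<subseteq> S" using pset[of 0] psS BS that(2) by auto
    ultimately show ?thesis using G2_def' by simp
  qed
  have hom_img: "\<phi> ` e \<in> G2" if eG: "e \<in> G1" for e
  proof (cases "e \<in> PE")
    case True
    then obtain j where j: "e = {p j, p (Suc j)}" "j < k" unfolding PE_def path_edges_def p_def using len by auto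
    define j' where "j' = k - Suc j"
    have "\<phi> ` e = {p (Suc j'), p j'}" using j rfp[of j] rfp[of "Suc j"] unfolding j'_def by (simp add: Suc_diff_Suc)
    moreover have "j' < k" unfolding j'_def using j by simp
    ultimately show ?thesis using pG2[of j'] by (simp add: insert_commute)
  next
    case False
    have eE: "e \<in> E" "e \<subseteq> S" using eG G1_def' by auto
    from cls[OF eE False] obtain a b where ab: "e = {a,b}" "a \<in> B" "b \<in> B" "a \<noteq> b" by blast
    show ?thesis
    proof (cases "a = p k")
      case True then show ?thesis using aux[of a b] ab eE by simp
    next
      case na: False
      show ?thesis
      proof (cases "b = p k")
        case True then show ?thesis using aux[of b a] ab eE by (simp add: insert_commute)
      next
        case nb: False
        have "a \<notin> set ps" "b \<notin> set ps" using Bps ab na nb by auto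
        then have "\<phi> ` e = e" using ab rfo by simp
        moreover have "e \<notin> {{p k, u} | u. u \<in> N}"
        proof
          assume "e \<in> {{p k, u} | u. u \<in> N}"
          then have "p k \<in> e" by blast
          then show False using ab na nb by simp
        qed
        then have "e \<in> E'" using E'_eq eE by simp
        ultimately show ?thesis using G2_def' eE by simp
      qed
    qed
  qed
  have hom: "{\<phi> u, \<phi> v} \<in> G2" if "{u,v} \<in> G1" for u v
    using hom_img[OF that] by simp
  have main: "num_walks l (p 0) G1 \<le> num_walks l (p 0) G2"
  proof (cases "N = {}")
    case True
    then have "E' = E" using E'_eq by simp
    then show ?thesis unfolding G1_def G2_def by simp
  next
    case Nne: False
    obtain l' where l': "l = Suc l'" using l1 by (cases l) auto
    have st1: "num_walks (Suc l') (p 0) G1 \<le> num_walks l' (p 1) G1"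
      by (rule walks_first[OF fin1]) (rule nb0)
    have st2: "num_walks l' (p 1) G1 \<le> num_walks l' (p k) G1"
    proof (cases "k = 1")
      case True then show ?thesis by simp
    next
      case False
      then have k3: "k \<ge> 3" using k1 oddk by presburger
      obtain b where bN: "b \<in> N" using Nne by blast
      define zs where "zs = ps @ [b]"
      have dzs: "distinct zs" using dist Nprop[OF bN] unfolding zs_def by simp
      have lzs: "length zs = Suc (Suc k)" using len unfolding zs_def by simp
      define \<sigma> where "\<sigma> = rf zs"
      have sp: "\<sigma> (p i) = p (k + 1 - i)" if "1 \<le> i" "i \<le> k" for i
      proof -
        have "zs ! i = p i" using that len unfolding zs_def p_def by (simp add: nth_append)
        moreover have "zs ! (k + 1 - i) = p (k + 1 - i)" using that len unfolding zs_def p_def by (simp add: nth_append)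
        ultimately show ?thesis using rf_nth[OF dzs, of i] lzs that unfolding \<sigma>_def by simp
      qed
      have s0: "\<sigma> (p 0) = b"
      proof -
        have "zs ! 0 = p 0" using len unfolding zs_def p_def by (simp add: nth_append)
        moreover have "zs ! (Suc k) = b" using len unfolding zs_def by (simp add: nth_append)
        ultimately show ?thesis using rf_nth[OF dzs, of 0] lzs unfolding \<sigma>_def by simp
      qed
      define c where "c = (k + 1) div 2"
      have kc: "k + 1 = 2 * c" using oddk unfolding c_def by presburger
      have c2: "2 \<le> c" "c < k" using kc k3 by auto
      have sz: "\<sigma> (p c) = p c" using sp[of c] c2 kc by simp
      define L where "L = p ` {..<c}"
      have zL: "p c \<notin> L"
      proof
        assume "p c \<in> L"
        then obtain i where "i < c" "p c = p i" unfolding L_def by blast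
        then show False using pinj[of c i] c2 by simp
      qed
      have xL: "p 1 \<in> L" unfolding L_def using c2 by simp
      have Lcond: "(v \<in> L \<or> v = p c) \<and> {\<sigma> u, \<sigma> v} \<in> G1" if uL: "u \<in> L" and uv: "{u,v} \<in> G1" for u v
      proof -
        obtain i where i: "i < c" "u = p i" using uL unfolding L_def by blast
        show ?thesis
        proof (cases "i = 0")
          case True
          then have v1: "v = p 1" using nb0 uv i by simp
          have "{\<sigma> u, \<sigma> v} = {b, p k}" using True i v1 s0 sp[of 1] k1 by simp
          then show ?thesis using v1 xL bkG1[OF bN] by (simp add: insert_commute)
        next
          case i0: False
          have ik: "i < k" using i c2 by simp
          have "{p i, v} \<in> E" using uv i G1_def' by simp
          then consider "v = p (i - 1)" | "v = p (Suc i)" using nb_int[of i v] i0 ik by blast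
          then show ?thesis
          proof cases
            case 1
            have vL: "v \<in> L" using 1 i unfolding L_def by simp
            have su: "\<sigma> u = p (k + 1 - i)" using sp[of i] i0 ik i by simp
            show ?thesis
            proof (cases "i = 1")
              case True
              then have "{\<sigma> u, \<sigma> v} = {p k, b}" using su 1 s0 by simp
              then show ?thesis using vL bkG1[OF bN] by simp
            next
              case False
              then have "\<sigma> v = p (Suc (k + 1 - i))" using sp[of "i - 1"] 1 i0 ik by (simp add: Suc_diff_le)
              moreover have "k + 1 - i < k" using False i0 ik by simp
              ultimately show ?thesis using su vL pG1[of "k + 1 - i"] by simp
            qed
          next
            case 2
            have vL: "v \<in> L \<or> v = p c" using 2 i unfolding L_def by (cases "Suc i = c") auto
            have su: "\<sigma> u = p (Suc (k - i))" using sp[of i] i0 ik i by (simp add: Suc_diff_le)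
            have sv: "\<sigma> v = p (k - i)" using sp[of "Suc i"] 2 ik by simp
            have "k - i < k" using i0 ik by simp
            then show ?thesis using vL su sv pG1[of "k - i"] by (simp add: insert_commute)
          qed
        qed
      qed
      have "num_walks l' (p 1) G1 \<le> num_walks l' (\<sigma> (p 1)) G1"
      proof -
        have injs: "inj \<sigma>" unfolding \<sigma>_def by (rule rf_inj[OF dzs])
        show ?thesis by (rule walks_refl[OF fin1 injs sz Lcond zL xL])
      qed
      moreover have "\<sigma> (p 1) = p k" using sp[of 1] k1 by simp
      ultimately show ?thesis by simp
    qed
    have st3: "num_walks l' (p k) G1 \<le> num_walks (Suc l') (p k) G1"
    proof (rule walks_mono_len[OF fin1])
      show "{p k, p (k - 1)} \<in> G1" using pG1[of "k - 1"] k1 by (simp add: insert_commute)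
    qed
    have st4: "num_walks (Suc l') (p k) G1 \<le> num_walks (Suc l') (\<phi> (p k)) G2"
      by (rule walks_hom[OF fin2 _ hom]) (simp add: \<phi>_def rf_inj[OF dist])
    have "\<phi> (p k) = p 0" using rfp[of k] by simp
    then show ?thesis using st1 st2 st3 st4 l' by simp
  qed
  then show ?thesis unfolding Let_def G1_def G2_def S_def B_def E'_def PE_def p_def by simp
qed
end
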